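(* For every preference profile $P$, every Pareto-optimal assignment is semi-popular, i.e. $\mathit{PO}(P)\subseteq SP(P)$.
   Context: Let $N=\{1,\dots,n\}$ be agents and $H$ a set of $n$ houses. A profile $P=(\succ_1,\dots,\succ_n)$ gives each agent a strict linear order on $H$. An assignment is a bijection $\mu:N\to H$; $M$ is the set of all assignments. Agent $x$ weakly prefers $\mu$ to $\lambda$ if $\mu(x)\succ_x\lambda(x)$ or $\mu(x)=\lambda(x)$, strictly if $\mu(x)\succ_x\lambda(x)$. $N_{\mu,\lambda}$ is the set of agents weakly preferring $\mu$ to $\lambda$; $\mu\succsim\lambda$ if $|N_{\mu,\lambda}|\ge|N_{\lambda,\mu}|$. $\mu$ Pareto-dominates $\lambda$ if all agents weakly prefer $\mu$ to $\lambda$ and some agent strictly; $\mathit{PO}(P)$ is the set of assignments not Pareto-dominated by any assignment. An assignment $\mu$ is semi-popular if $|\{\lambda\in M:\mu\succsim\lambda\}|\ge |M|/2$; $SP(P)$ is the set of semi-popular assignments. *)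

theory Defs
  imports "HOL-Library.FuncSet"
begin

text \<open>A profile P gives each agent x a strict preference relation P x on houses;
  (h, h') \<in> P x means agent x strictly prefers h to h'.\<close>

definition assignments :: "'a set \<Rightarrow> 'h set \<Rightarrow> ('a \<Rightarrow> 'h) set" where
  "assignments N H = {\<mu> \<in> N \<rightarrow>\<^sub>E H. bij_betw \<mu> N H}"

definition weakly_prefers :: "('a \<Rightarrow> 'h rel) \<Rightarrow> 'a \<Rightarrow> ('a \<Rightarrow> 'h) \<Rightarrow> ('a \<Rightarrow> 'h) \<Rightarrow> bool" where
  "weakly_prefers P x \<mu> l \<longleftrightarrow> (\<mu> x, l x) \<in> P x \<or> \<mu> x = l x"

definition strictly_prefers :: "('a \<Rightarrow> 'h rel) \<Rightarrow> 'a \<Rightarrow> ('a \<Rightarrow> 'h) \<Rightarrow> ('a \<Rightarrow> 'h) \<Rightarrow> bool" where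
  "strictly_prefers P x \<mu> l \<longleftrightarrow> (\<mu> x, l x) \<in> P x"

definition weak_set :: "'a set \<Rightarrow> ('a \<Rightarrow> 'h rel) \<Rightarrow> ('a \<Rightarrow> 'h) \<Rightarrow> ('a \<Rightarrow> 'h) \<Rightarrow> 'a set" where
  "weak_set N P \<mu> l = {x \<in> N. weakly_prefers P x \<mu> l}"

definition pop_geq :: "'a set \<Rightarrow> ('a \<Rightarrow> 'h rel) \<Rightarrow> ('a \<Rightarrow> 'h) \<Rightarrow> ('a \<Rightarrow> 'h) \<Rightarrow> bool" where
  "pop_geq N P \<mu> l \<longleftrightarrow> card (weak_set N P \<mu> l) \<ge> card (weak_set N P l \<mu>)"

definition pareto_dominates :: "'a set \<Rightarrow> ('a \<Rightarrow> 'h rel) \<Rightarrow> ('a \<Rightarrow> 'h) \<Rightarrow> ('a \<Rightarrow> 'h) \<Rightarrow> bool" where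
  "pareto_dominates N P \<mu> l \<longleftrightarrow>
     (\<forall>x\<in>N. weakly_prefers P x \<mu> l) \<and> (\<exists>x\<in>N. strictly_prefers P x \<mu> l)"

definition PO :: "'a set \<Rightarrow> 'h set \<Rightarrow> ('a \<Rightarrow> 'h rel) \<Rightarrow> ('a \<Rightarrow> 'h) set" where
  "PO N H P = {\<mu> \<in> assignments N H. \<not> (\<exists>l\<in>assignments N H. pareto_dominates N P l \<mu>)}"

definition SP :: "'a set \<Rightarrow> 'h set \<Rightarrow> ('a \<Rightarrow> 'h rel) \<Rightarrow> ('a \<Rightarrow> 'h) set" where
  "SP N H P = {\<mu> \<in> assignments N H.
      2 * card {l \<in> assignments N H. pop_geq N P \<mu> l} \<ge> card (assignments N H)}"

end

theory Submission
  imports Defs "HOL-Combinatorics.Transposition"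
begin

definition star :: "'a set \<Rightarrow> ('a \<Rightarrow> 'h) \<Rightarrow> ('a \<Rightarrow> 'h) \<Rightarrow> ('a \<Rightarrow> 'h)" where
  "star N \<mu> l = restrict (\<lambda>x. \<mu> (inv_into N l (\<mu> x))) N"

lemma star_in:
  assumes mu: "\<mu> \<in> assignments N H" and l: "l \<in> assignments N H"
  shows "star N \<mu> l \<in> assignments N H"
proof -
  have bm: "bij_betw \<mu> N H" and bl: "bij_betw l N H"
    using mu l by (auto simp: assignments_def)
  have "bij_betw (\<mu> \<circ> inv_into N l \<circ> \<mu>) N H"
    by (intro bij_betw_trans[OF bm] bij_betw_trans[OF _ bm] bij_betw_inv_into bl)
  hence "bij_betw (star N \<mu> l) N H"
    by (rule bij_betw_cong[THEN iffD1, rotated]) (simp add: star_def)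
  moreover have "star N \<mu> l \<in> N \<rightarrow>\<^sub>E H"
    using \<open>bij_betw (star N \<mu> l) N H\<close> by (auto simp: star_def bij_betw_def)
  ultimately show ?thesis by (simp add: assignments_def)
qed

lemma star_star:
  assumes mu: "\<mu> \<in> assignments N H" and l: "l \<in> assignments N H"
  shows "star N \<mu> (star N \<mu> l) = l"
proof
  fix x
  have bm: "bij_betw \<mu> N H" and bl: "bij_betw l N H" and ext: "l \<in> extensional N"
    using mu l by (auto simp: assignments_def PiE_iff)
  have bs: "bij_betw (star N \<mu> l) N H" using star_in[OF mu l] by (simp add: assignments_def)
  show "star N \<mu> (star N \<mu> l) x = l x"
  proof (cases "x \<in> N")
    case True
    let ?z = "inv_into N \<mu> (l (inv_into N \<mu> (\<mu> x)))"
    have ix: "inv_into N \<mu> (\<mu> x) = x" using bm True by (simp add: bij_betw_def)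
    have lx: "l x \<in> H" using bl True by (auto simp: bij_betw_def)
    have zN: "?z \<in> N" using ix lx bm by (metis bij_betw_def inv_into_into)
    have muz: "\<mu> ?z = l x" using ix lx bm by (simp add: bij_betw_def f_inv_into_f)
    have "inv_into N l (\<mu> ?z) = x" using muz bl True by (simp add: bij_betw_def)
    hence "star N \<mu> l ?z = \<mu> x" using zN by (simp add: star_def)
    hence "inv_into N (star N \<mu> l) (\<mu> x) = ?z"
      using bs zN by (intro inv_into_f_eq) (auto simp: bij_betw_def)
    thus ?thesis using True muz by (simp add: star_def)
  next
    case False
    thus ?thesis using ext by (simp add: star_def extensional_def)
  qed
qed

lemma no_mutual_envy:
  assumes mu: "\<mu> \<in> PO N H P" and x: "x \<in> N" and y: "y \<in> N"
    and e1: "(\<mu> y, \<mu> x) \<in> P x" and e2: "(\<mu> x, \<mu> y) \<in> P y"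
    and irr: "\<forall>i\<in>N. irrefl (P i)"
  shows False
proof -
  have m: "\<mu> \<in> assignments N H" using mu by (simp add: PO_def)
  have bm: "bij_betw \<mu> N H" and ext: "\<mu> \<in> N \<rightarrow>\<^sub>E H" using m by (auto simp: assignments_def)
  have xy: "x \<noteq> y" using e1 irr x by (auto simp: irrefl_def)
  define \<nu> where "\<nu> = \<mu>(x := \<mu> y, y := \<mu> x)"
  have nsw: "\<nu> = Fun.swap x y \<mu>" by (auto simp: \<nu>_def transpose_def)
  have "bij_betw (Fun.swap x y \<mu>) N H"
    using bm by (simp add: bij_betw_swap_iff x y)
  hence bn: "bij_betw \<nu> N H" using nsw by simp
  have "\<nu> \<in> N \<rightarrow>\<^sub>E H" using ext x y by (auto simp: \<nu>_def)
  hence nu: "\<nu> \<in> assignments N H" using bn by (simp add: assignments_def)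
  have "pareto_dominates N P \<nu> \<mu>"
    unfolding pareto_dominates_def weakly_prefers_def strictly_prefers_def
    using x y xy e1 e2 by (auto simp: \<nu>_def)
  thus False using mu nu by (auto simp: PO_def)
qed

lemma key_le:
  assumes mu: "\<mu> \<in> PO N H P" and l: "l \<in> assignments N H" and fin: "finite N"
    and ord: "\<forall>i\<in>N. strict_linear_order_on H (P i)"
  shows "card (weak_set N P (star N \<mu> l) \<mu>) \<le> card (weak_set N P \<mu> l)"
proof -
  have m: "\<mu> \<in> assignments N H" using mu by (simp add: PO_def)
  have bm: "bij_betw \<mu> N H" and bl: "bij_betw l N H"
    using m l by (auto simp: assignments_def)
  have irr: "\<forall>i\<in>N. irrefl (P i)" using ord by (simp add: strict_linear_order_on_def)
  let ?g = "\<lambda>x. inv_into N l (\<mu> x)"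
  have inj: "inj_on ?g N"
  proof (rule inj_onI)
    fix a b assume a: "a \<in> N" and b: "b \<in> N" and eq: "?g a = ?g b"
    have "\<mu> a \<in> H" "\<mu> b \<in> H" using a b bm by (auto simp: bij_betw_def)
    hence "\<mu> a = \<mu> b" using eq bl by (metis bij_betw_def f_inv_into_f)
    thus "a = b" using a b bm by (auto simp: bij_betw_def inj_on_def)
  qed
  have maps: "?g ` weak_set N P (star N \<mu> l) \<mu> \<subseteq> weak_set N P \<mu> l"
  proof
    fix z assume "z \<in> ?g ` weak_set N P (star N \<mu> l) \<mu>"
    then obtain x where x: "x \<in> N" and w: "weakly_prefers P x (star N \<mu> l) \<mu>" and z: "z = ?g x"
      by (auto simp: weak_set_def)
    let ?y = "?g x"
    have mx: "\<mu> x \<in> H" using x bm by (auto simp: bij_betw_def)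
    have yN: "?y \<in> N" using mx bl by (metis bij_betw_def inv_into_into)
    have ly: "l ?y = \<mu> x" using mx bl by (metis bij_betw_def f_inv_into_f)
    have my: "\<mu> ?y \<in> H" using yN bm by (auto simp: bij_betw_def)
    have w': "(\<mu> ?y, \<mu> x) \<in> P x \<or> \<mu> ?y = \<mu> x"
      using w x by (simp add: weakly_prefers_def star_def)
    have "weakly_prefers P ?y \<mu> l"
    proof (cases "\<mu> ?y = \<mu> x")
      case True thus ?thesis using ly by (simp add: weakly_prefers_def)
    next
      case False
      hence e1: "(\<mu> ?y, \<mu> x) \<in> P x" using w' by simp
      have "total_on H (P ?y)" using ord yN by (simp add: strict_linear_order_on_def)
      hence "(\<mu> ?y, \<mu> x) \<in> P ?y \<or> (\<mu> x, \<mu> ?y) \<in> P ?y"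
        using False mx my by (auto simp: total_on_def)
      moreover have "(\<mu> x, \<mu> ?y) \<notin> P ?y"
        using no_mutual_envy[OF mu x yN e1 _ irr] by blast
      ultimately show ?thesis using ly by (simp add: weakly_prefers_def)
    qed
    thus "z \<in> weak_set N P \<mu> l" using z yN by (simp add: weak_set_def)
  qed
  have "finite (weak_set N P \<mu> l)" using fin by (simp add: weak_set_def)
  moreover have "inj_on ?g (weak_set N P (star N \<mu> l) \<mu>)"
    using inj by (rule inj_on_subset) (auto simp: weak_set_def)
  ultimately show ?thesis using maps by (metis card_inj_on_le)
qed

lemma one_of:
  assumes mu: "\<mu> \<in> PO N H P" and l: "l \<in> assignments N H" and fin: "finite N"
    and ord: "\<forall>i\<in>N. strict_linear_order_on H (P i)"
  shows "pop_geq N P \<mu> l \<or> pop_geq N P \<mu> (star N \<mu> l)"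
proof -
  have m: "\<mu> \<in> assignments N H" using mu by (simp add: PO_def)
  have s: "star N \<mu> l \<in> assignments N H" using star_in[OF m l] .
  have a: "card (weak_set N P (star N \<mu> l) \<mu>) \<le> card (weak_set N P \<mu> l)"
    using key_le[OF mu l fin ord] .
  have b: "card (weak_set N P l \<mu>) \<le> card (weak_set N P \<mu> (star N \<mu> l))"
    using key_le[OF mu s fin ord] star_star[OF m l] by simp
  show ?thesis using a b by (auto simp: pop_geq_def)
qed

theorem proposition4p2:
  fixes n :: nat and H :: "'h set" and P :: "nat \<Rightarrow> 'h rel"
  assumes "finite H" and "card H = n"
    and "\<forall>i\<in>{1..n}. strict_linear_order_on H (P i) \<and> P i \<subseteq> H \<times> H"
  shows "PO {1..n} H P \<subseteq> SP {1..n} H P"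
proof
  fix \<mu> assume mu: "\<mu> \<in> PO {1..n} H P"
  let ?N = "{1..n::nat}"
  let ?M = "assignments ?N H"
  let ?A = "{l \<in> ?M. pop_geq ?N P \<mu> l}"
  let ?f = "star ?N \<mu>"
  have ord: "\<forall>i\<in>?N. strict_linear_order_on H (P i)" using assms(3) by blast
  have m: "\<mu> \<in> ?M" using mu by (simp add: PO_def)
  have fM: "finite ?M"
  proof -
    have "?M \<subseteq> PiE ?N (\<lambda>_. H)" by (auto simp: assignments_def)
    thus ?thesis using finite_PiE[of ?N "\<lambda>_. H"] assms(1) by (auto intro: finite_subset)
  qed
  have sub: "?M \<subseteq> ?A \<union> ?f ` ?A"
  proof
    fix l assume l: "l \<in> ?M"
    show "l \<in> ?A \<union> ?f ` ?A"
    proof (cases "pop_geq ?N P \<mu> l")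
      case True thus ?thesis using l by simp
    next
      case False
      hence "pop_geq ?N P \<mu> (?f l)" using one_of[OF mu l _ ord] by auto
      hence "?f l \<in> ?A" using star_in[OF m l] by simp
      moreover have "l = ?f (?f l)" using star_star[OF m l] by simp
      ultimately show ?thesis by blast
    qed
  qed
  have fA: "finite ?A" using fM by simp
  have "card ?M \<le> card (?A \<union> ?f ` ?A)"
    using sub fA by (intro card_mono) auto
  also have "\<dots> \<le> card ?A + card (?f ` ?A)" by (rule card_Un_le)
  also have "\<dots> \<le> 2 * card ?A" using card_image_le[OF fA, of ?f] by simp
  finally show "\<mu> \<in> SP ?N H P" using m by (simp add: SP_def)
qed

end
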